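(* If $G$ is a minimally $1/2$-tough claw-free graph, then for every edge $e$ of $G$ there exists a witness set $S=S(e)\subseteq V(G)$ for $e$ (in the sense defined in the context, with $t=1/2$) such that $|S|\le 1$.
   Context: All graphs are finite, simple and undirected. A graph is claw-free if it contains no induced subgraph isomorphic to $K_{1,3}$. $\omega(H)$ denotes the number of components of $H$. A cutset of $G$ is a vertex set $S$ with $G-S$ disconnected. For positive real $t$, $G$ is $t$-tough if $\omega(G-S)\le |S|/t$ for every cutset $S$; the toughness $\tau(G)$ is the largest such $t$, with $\tau(K_n)=\infty$ for all $n\ge1$. $G$ is minimally $t$-tough if $\tau(G)=t$ and $\tau(G-e)<t$ for every edge $e$. For a minimally $t$-tough graph $G$ and an edge $e$, a witness set for $e$ is a set $S\subseteq V(G)$ such that either $e$ is a bridge of $G$ and $S=\emptyset$, or $e$ is not a bridge of $G$, $\omega(G-S)\le |S|/t$, $\omega((G-e)-S)>|S|/t$, and $e$ is a bridge in $G-S$. *)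

theory Defs
  imports "HOL-Library.Extended_Real"
begin

definition graph :: "'a set \<Rightarrow> 'a set set \<Rightarrow> bool" where
  "graph V E \<longleftrightarrow> finite V \<and> (\<forall>e\<in>E. \<exists>u v. u \<noteq> v \<and> u \<in> V \<and> v \<in> V \<and> e = {u, v})"

definition adj_rel :: "'a set \<Rightarrow> 'a set set \<Rightarrow> ('a \<times> 'a) set" where
  "adj_rel V E = {(x, y). x \<in> V \<and> y \<in> V \<and> {x, y} \<in> E}"

definition components :: "'a set \<Rightarrow> 'a set set \<Rightarrow> 'a set set" where
  "components V E = (\<lambda>v. {u \<in> V. (v, u) \<in> (adj_rel V E)\<^sup>*}) ` V"

definition ncomp :: "'a set \<Rightarrow> 'a set set \<Rightarrow> nat" where
  "ncomp V E = card (components V E)"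

definition del_verts_E :: "'a set set \<Rightarrow> 'a set \<Rightarrow> 'a set set" where
  "del_verts_E E S = {e \<in> E. e \<inter> S = {}}"

definition cutset :: "'a set \<Rightarrow> 'a set set \<Rightarrow> 'a set \<Rightarrow> bool" where
  "cutset V E S \<longleftrightarrow> S \<subseteq> V \<and> ncomp (V - S) (del_verts_E E S) > 1"

definition tough :: "'a set \<Rightarrow> 'a set set \<Rightarrow> real \<Rightarrow> bool" where
  "tough V E t \<longleftrightarrow> (\<forall>S. cutset V E S \<longrightarrow> real (ncomp (V - S) (del_verts_E E S)) \<le> real (card S) / t)"

text \<open>Toughness: the largest positive t such that G is t-tough (infinity for complete
  graphs, where every t works; 0 if no positive t works, i.e. for disconnected graphs).\<close>

definition toughness :: "'a set \<Rightarrow> 'a set set \<Rightarrow> ereal" where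
  "toughness V E = Sup ({0} \<union> {ereal t | t. t > 0 \<and> tough V E t})"

definition minimally_tough :: "'a set \<Rightarrow> 'a set set \<Rightarrow> real \<Rightarrow> bool" where
  "minimally_tough V E t \<longleftrightarrow>
     toughness V E = ereal t \<and> (\<forall>e\<in>E. toughness V (E - {e}) < ereal t)"

definition claw_free :: "'a set \<Rightarrow> 'a set set \<Rightarrow> bool" where
  "claw_free V E \<longleftrightarrow> \<not> (\<exists>v a b c. v \<in> V \<and> a \<in> V \<and> b \<in> V \<and> c \<in> V \<and>
      distinct [v, a, b, c] \<and> {v, a} \<in> E \<and> {v, b} \<in> E \<and> {v, c} \<in> E \<and>
      {a, b} \<notin> E \<and> {a, c} \<notin> E \<and> {b, c} \<notin> E)"

definition bridge :: "'a set \<Rightarrow> 'a set set \<Rightarrow> 'a set \<Rightarrow> bool" where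
  "bridge V E e \<longleftrightarrow> e \<in> E \<and> ncomp V (E - {e}) > ncomp V E"

definition witness_set :: "'a set \<Rightarrow> 'a set set \<Rightarrow> real \<Rightarrow> 'a set \<Rightarrow> 'a set \<Rightarrow> bool" where
  "witness_set V E t e S \<longleftrightarrow> S \<subseteq> V \<and>
     ((bridge V E e \<and> S = {}) \<or>
      (\<not> bridge V E e \<and>
       real (ncomp (V - S) (del_verts_E E S)) \<le> real (card S) / t \<and>
       real (ncomp (V - S) (del_verts_E (E - {e}) S)) > real (card S) / t \<and>
       bridge (V - S) (del_verts_E E S) e))"

end

theory Submission
  imports Defs
begin


lemma adj_sym: "(x,y) \<in> adj_rel V E \<Longrightarrow> (y,x) \<in> adj_rel V E"
  by (auto simp: adj_rel_def insert_commute)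

lemma rt_sym: "(x,y) \<in> (adj_rel V E)\<^sup>* \<Longrightarrow> (y,x) \<in> (adj_rel V E)\<^sup>*"
proof (induction rule: rtrancl_induct)
  case base then show ?case by simp
next
  case (step y z)
  then show ?case by (meson adj_sym converse_rtrancl_into_rtrancl)
qed

lemma rt_in: "(x,y) \<in> (adj_rel V E)\<^sup>* \<Longrightarrow> x \<in> V \<Longrightarrow> y \<in> V"
  by (induction rule: rtrancl_induct) (auto simp: adj_rel_def)

definition cc :: "'a set \<Rightarrow> 'a set set \<Rightarrow> 'a \<Rightarrow> 'a set" where
  "cc V E v = {u \<in> V. (v,u) \<in> (adj_rel V E)\<^sup>*}"

lemma components_cc: "components V E = cc V E ` V"
  by (simp add: components_def cc_def)

lemma cc_eq: "(a,b) \<in> (adj_rel V E)\<^sup>* \<Longrightarrow> cc V E a = cc V E b"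
proof -
  assume ab: "(a,b) \<in> (adj_rel V E)\<^sup>*"
  then have ba: "(b,a) \<in> (adj_rel V E)\<^sup>*" by (rule rt_sym)
  show ?thesis unfolding cc_def
  proof (intro set_eqI iffI)
    fix x assume "x \<in> {u \<in> V. (a, u) \<in> (adj_rel V E)\<^sup>*}"
    then show "x \<in> {u \<in> V. (b, u) \<in> (adj_rel V E)\<^sup>*}" using ba rtrancl_trans[of b a] by blast
  next
    fix x assume "x \<in> {u \<in> V. (b, u) \<in> (adj_rel V E)\<^sup>*}"
    then show "x \<in> {u \<in> V. (a, u) \<in> (adj_rel V E)\<^sup>*}" using ab rtrancl_trans[of a b] by blast
  qed
qed

lemma cc_self: "v \<in> V \<Longrightarrow> v \<in> cc V E v"
  by (simp add: cc_def)

lemma finite_comp: "finite V \<Longrightarrow> finite (components V E)"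
  by (simp add: components_cc)

lemma card_le2: "finite X \<Longrightarrow> (\<forall>x\<in>X. \<forall>y\<in>X. \<forall>z\<in>X. x=y \<or> x=z \<or> y=z) \<Longrightarrow> card X \<le> 2"
proof -
  assume f: "finite X" and h: "\<forall>x\<in>X. \<forall>y\<in>X. \<forall>z\<in>X. x=y \<or> x=z \<or> y=z"
  show ?thesis
  proof (cases "X = {}")
    case True then show ?thesis by simp
  next
    case False
    then obtain x where x: "x \<in> X" by blast
    show ?thesis
    proof (cases "X \<subseteq> {x}")
      case True then show ?thesis using card_mono[of "{x}" X] by simp
    next
      case False
      then obtain y where y: "y \<in> X" "y \<noteq> x" by blast
      have "X \<subseteq> {x,y}"
      proof
        fix z assume "z \<in> X"
        then have "x=y \<or> x=z \<or> y=z" using h x y(1) by blast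
        then show "z \<in> {x,y}" using y(2) by auto
      qed
      then have "card X \<le> card {x,y}" by (simp add: card_mono)
      also have "\<dots> \<le> 2" by (simp add: card_insert_le_m1)
      finally show ?thesis .
    qed
  qed
qed

lemma ncomp_del_edge:
  assumes fin: "finite W" and uv: "u \<in> W" "v \<in> W"
  shows "ncomp W (F - {{u,v}}) \<le> ncomp W F + 1"
proof -
  define F' where "F' = F - {{u,v}}"
  let ?R = "adj_rel W F" and ?R' = "adj_rel W F'"
  have sub: "?R' \<subseteq> ?R" by (auto simp: adj_rel_def F'_def)
  have stp: "(x,y) \<in> ?R' \<or> x = u \<or> x = v" if "(x,y) \<in> ?R" for x y
    using that by (auto simp: adj_rel_def F'_def doubleton_eq_iff)
  have path: "(w,x) \<in> ?R'\<^sup>* \<or> (w,u) \<in> ?R'\<^sup>* \<or> (w,v) \<in> ?R'\<^sup>*" if "(w,x) \<in> ?R\<^sup>*" for w x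
    using that
  proof (induction rule: rtrancl_induct)
    case base then show ?case by simp
  next
    case (step y z)
    have "(y,z) \<in> ?R' \<or> y = u \<or> y = v" using stp step.hyps(2) by blast
    then show ?case using step.IH rtrancl_into_rtrancl[of w y ?R' z] by blast
  qed
  define A where "A = {cc W F' w | w. w \<in> W \<and> (w,u) \<notin> ?R'\<^sup>* \<and> (w,v) \<notin> ?R'\<^sup>*}"
  have comps: "components W F' \<subseteq> A \<union> {cc W F' u, cc W F' v}"
  proof
    fix C assume "C \<in> components W F'"
    then obtain w where w: "w \<in> W" "C = cc W F' w" by (auto simp: components_cc)
    then show "C \<in> A \<union> {cc W F' u, cc W F' v}"
      using cc_eq[of w u W F'] cc_eq[of w v W F'] by (auto simp: A_def)
  qed
  have Asub: "A \<subseteq> components W F - {cc W F u}"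
  proof
    fix C assume "C \<in> A"
    then obtain w where w: "w \<in> W" "(w,u) \<notin> ?R'\<^sup>*" "(w,v) \<notin> ?R'\<^sup>*" "C = cc W F' w"
      by (auto simp: A_def)
    have eq: "cc W F' w = cc W F w"
    proof
      show "cc W F' w \<subseteq> cc W F w" unfolding cc_def using rtrancl_mono[OF sub] by blast
      show "cc W F w \<subseteq> cc W F' w" unfolding cc_def using path w by blast
    qed
    have "u \<notin> cc W F w" unfolding cc_def using path w by blast
    then have "cc W F w \<noteq> cc W F u" using cc_self[OF uv(1)] by blast
    then show "C \<in> components W F - {cc W F u}"
      using w eq by (auto simp: components_cc)
  qed
  have fc: "finite (components W F)" using fin by (rule finite_comp)
  have inc: "cc W F u \<in> components W F" using uv by (simp add: components_cc)
  have "card A \<le> card (components W F) - 1"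
    using card_mono[OF _ Asub] fc inc by (simp add: card_Diff_singleton)
  moreover have "card (components W F) \<ge> 1" using fc inc
    by (metis One_nat_def Suc_leI card_gt_0_iff empty_iff)
  moreover have "card (components W F') \<le> card A + 2"
  proof -
    have "finite A" using finite_subset[OF Asub] fc by blast
    then have "card (A \<union> {cc W F' u, cc W F' v}) \<le> card A + card {cc W F' u, cc W F' v}"
      using card_Un_le by blast
    also have "\<dots> \<le> card A + 2" by (simp add: card_insert_le_m1)
    finally show ?thesis using card_mono[OF _ comps] \<open>finite A\<close> by (meson finite.emptyI finite.insertI finite_UnI le_trans)
  qed
  ultimately show ?thesis by (simp add: ncomp_def F'_def)
qed



lemma ncomp_add_vertex:
  assumes g: "graph V E" and cf: "claw_free V E" and sS: "s \<in> S" and SV: "S \<subseteq> V"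
  shows "ncomp (V - S) (del_verts_E E S) \<le> ncomp (V - (S - {s})) (del_verts_E E (S - {s})) + 1"
proof -
  define W where "W = V - S"
  define W' where "W' = V - (S - {s})"
  define F where "F = del_verts_E E S"
  define F' where "F' = del_verts_E E (S - {s})"
  let ?R = "adj_rel W F" and ?R' = "adj_rel W' F'"
  have fin: "finite V" using g by (simp add: graph_def)
  have finW: "finite W" "finite W'" using fin by (auto simp: W_def W'_def)
  have sW: "s \<notin> W" "s \<in> W'" using sS SV by (auto simp: W_def W'_def)
  have sub: "?R \<subseteq> ?R'" by (auto simp: adj_rel_def W_def W'_def F_def F'_def del_verts_E_def)
  have stp: "(x,y) \<in> ?R" if "(x,y) \<in> ?R'" "x \<noteq> s" "y \<noteq> s" for x y
    using that by (auto simp: adj_rel_def W_def W'_def F_def F'_def del_verts_E_def)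
  have inW: "y \<in> W" if "(w,y) \<in> ?R\<^sup>*" "w \<in> W" for w y using rt_in that by metis
  have path: "(w,x) \<in> ?R\<^sup>* \<or> (\<exists>n. (w,n) \<in> ?R\<^sup>* \<and> (n,s) \<in> ?R')"
    if "(w,x) \<in> ?R'\<^sup>*" "w \<in> W" for w x
    using that(1)
  proof (induction rule: rtrancl_induct)
    case base then show ?case by simp
  next
    case (step y z)
    show ?case
    proof (cases "(w,y) \<in> ?R\<^sup>*")
      case True
      then have "y \<noteq> s" using inW that(2) sW by blast
      show ?thesis
      proof (cases "z = s")
        case True then show ?thesis using \<open>(w,y) \<in> ?R\<^sup>*\<close> step.hyps(2) by blast
      next
        case False
        then have "(y,z) \<in> ?R" using stp step.hyps(2) \<open>y \<noteq> s\<close> by blast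
        then show ?thesis using \<open>(w,y) \<in> ?R\<^sup>*\<close> by (meson rtrancl_into_rtrancl)
      qed
    next
      case False then show ?thesis using step.IH by blast
    qed
  qed
  define A where "A = {cc W F w | w. w \<in> W \<and> (w,s) \<notin> ?R'\<^sup>*}"
  define N where "N = {n. n \<in> W \<and> (n,s) \<in> ?R'}"
  have comps: "components W F \<subseteq> A \<union> cc W F ` N"
  proof
    fix C assume "C \<in> components W F"
    then obtain w where w: "w \<in> W" "C = cc W F w" by (auto simp: components_cc)
    show "C \<in> A \<union> cc W F ` N"
    proof (cases "(w,s) \<in> ?R'\<^sup>*")
      case True
      have "(w,s) \<notin> ?R\<^sup>*" using inW w(1) sW by blast
      then obtain n where n: "(w,n) \<in> ?R\<^sup>*" "(n,s) \<in> ?R'" using path[OF True w(1)] by blast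
      have "n \<in> W" using inW n(1) w(1) by blast
      then have "n \<in> N" using n by (simp add: N_def)
      moreover have "C = cc W F n" using w(2) cc_eq[OF n(1)] by simp
      ultimately show ?thesis by blast
    next
      case False then show ?thesis using w by (auto simp: A_def)
    qed
  qed
  have Asub: "A \<subseteq> components W' F' - {cc W' F' s}"
  proof
    fix C assume "C \<in> A"
    then obtain w where w: "w \<in> W" "(w,s) \<notin> ?R'\<^sup>*" "C = cc W F w" by (auto simp: A_def)
    have eq: "cc W F w = cc W' F' w"
    proof
      show "cc W F w \<subseteq> cc W' F' w" unfolding cc_def using rtrancl_mono[OF sub]
        by (auto simp: W_def W'_def)
      show "cc W' F' w \<subseteq> cc W F w"
      proof
        fix u assume "u \<in> cc W' F' w"
        then have u: "(w,u) \<in> ?R'\<^sup>*" by (simp add: cc_def)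
        have "(w,u) \<in> ?R\<^sup>*"
        proof (rule ccontr)
          assume "(w,u) \<notin> ?R\<^sup>*"
          then obtain n where "(w,n) \<in> ?R\<^sup>*" "(n,s) \<in> ?R'" using path[OF u w(1)] by blast
          then have "(w,s) \<in> ?R'\<^sup>*" using rtrancl_mono[OF sub]
            by (meson in_mono rtrancl_into_rtrancl)
          then show False using w(2) by blast
        qed
        then show "u \<in> cc W F w" using inW w(1) by (simp add: cc_def)
      qed
    qed
    have "w \<in> W'" using w(1) by (auto simp: W_def W'_def)
    moreover have "s \<notin> cc W' F' w" using w(2) by (simp add: cc_def)
    then have "cc W' F' w \<noteq> cc W' F' s" using cc_self[OF sW(2)] by blast
    ultimately show "C \<in> components W' F' - {cc W' F' s}"
      using w eq by (auto simp: components_cc)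
  qed
  have N2: "card (cc W F ` N) \<le> 2"
  proof (rule card_le2)
    show "finite (cc W F ` N)" using finW(1) by (simp add: N_def)
    show "\<forall>x\<in>cc W F ` N. \<forall>y\<in>cc W F ` N. \<forall>z\<in>cc W F ` N. x = y \<or> x = z \<or> y = z"
    proof (rule ccontr)
      assume "\<not> ?thesis"
      then obtain a b c where abc: "a \<in> N" "b \<in> N" "c \<in> N"
        "cc W F a \<noteq> cc W F b" "cc W F a \<noteq> cc W F c" "cc W F b \<noteq> cc W F c" by blast
      have nadj: "{x,y} \<notin> E" if "x \<in> N" "y \<in> N" "cc W F x \<noteq> cc W F y" for x y
      proof
        assume "{x,y} \<in> E"
        then have "(x,y) \<in> ?R" using that(1,2)
          by (auto simp: N_def adj_rel_def F_def del_verts_E_def W_def)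
        then have "cc W F x = cc W F y" by (intro cc_eq) auto
        then show False using that(3) by blast
      qed
      have adj: "{s,x} \<in> E" "x \<in> V" "x \<noteq> s" if "x \<in> N" for x
        using that sW by (auto simp: N_def adj_rel_def F'_def del_verts_E_def W_def insert_commute)
      have "distinct [s,a,b,c]" using abc adj by auto
      then show False using cf abc nadj[of a b] nadj[of a c] nadj[of b c] adj[of a] adj[of b] adj[of c] sS SV
        unfolding claw_free_def by blast
    qed
  qed
  have fc: "finite (components W' F')" using finW(2) by (rule finite_comp)
  have inc: "cc W' F' s \<in> components W' F'" using sW by (simp add: components_cc)
  have "card A \<le> card (components W' F') - 1"
    using card_mono[OF _ Asub] fc inc by (simp add: card_Diff_singleton)
  moreover have "card (components W' F') \<ge> 1" using fc inc
    by (metis One_nat_def Suc_leI card_gt_0_iff empty_iff)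
  moreover have "card (components W F) \<le> card A + 2"
  proof -
    have "finite A" using finite_subset[OF Asub] fc by blast
    have "card (components W F) \<le> card (A \<union> cc W F ` N)"
      using card_mono[OF _ comps] \<open>finite A\<close> finW(1) by (simp add: N_def)
    also have "\<dots> \<le> card A + card (cc W F ` N)" using card_Un_le by blast
    finally show ?thesis using N2 by linarith
  qed
  ultimately show ?thesis by (simp add: ncomp_def W_def W'_def F_def F'_def)
qed

lemma tough_of_toughness:
  assumes "toughness V E = ereal t" "t > 0" shows "tough V E t"
proof (rule ccontr)
  assume "\<not> tough V E t"
  then obtain S where S: "cutset V E S" "real (ncomp (V - S) (del_verts_E E S)) > real (card S) / t"
    by (auto simp: tough_def)
  define w where "w = real (ncomp (V - S) (del_verts_E E S))"
  define c where "c = real (card S)"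
  have w1: "w > 1" using S(1) by (simp add: cutset_def w_def)
  have c0: "c \<ge> 0" by (simp add: c_def)
  have "toughness V E \<le> ereal (c / w)"
    unfolding toughness_def
  proof (rule Sup_least)
    fix x assume "x \<in> {0} \<union> {ereal t |t. 0 < t \<and> tough V E t}"
    then consider "x = 0" | t' where "x = ereal t'" "t' > 0" "tough V E t'" by blast
    then show "x \<le> ereal (c / w)"
    proof cases
      case 1 then show ?thesis using c0 w1 by simp
    next
      case 2
      then have "w \<le> c / t'" using S(1) by (auto simp: tough_def w_def c_def)
      then have "w * t' \<le> c" using 2(2) by (simp add: field_simps)
      then have "t' \<le> c / w" using w1 by (simp add: field_simps)
      then show ?thesis using 2 by simp
    qed
  qed
  moreover have "c / w < t"
  proof -
    have "c / t < w" using S(2) by (simp add: w_def c_def)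
    then have "c < w * t" using assms(2) by (simp add: field_simps)
    then show ?thesis using w1 by (simp add: field_simps)
  qed
  ultimately show False using assms(1) by simp
qed

lemma not_tough:
  assumes "toughness V E < ereal t" "t > 0" shows "\<not> tough V E t"
proof
  assume "tough V E t"
  then have "ereal t \<le> toughness V E" unfolding toughness_def
    using assms(2) by (intro Sup_upper) blast
  then show False using assms(1) by simp
qed



theorem mainTheorem9:
  fixes V :: "'a set" and E :: "'a set set"
  assumes "graph V E"
    and "claw_free V E"
    and "minimally_tough V E (1/2)"
  shows "\<forall>e\<in>E. \<exists>S. witness_set V E (1/2) e S \<and> card S \<le> 1"
proof
  fix e assume eE: "e \<in> E"
  have tV: "toughness V E = ereal (1/2)" and tE: "\<forall>e\<in>E. toughness V (E - {e}) < ereal (1/2)"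
    using assms(3) by (auto simp: minimally_tough_def)
  have T: "tough V E (1/2)" using tough_of_toughness[OF tV] by simp
  have Tc: "real (ncomp (V - S) (del_verts_E E S)) \<le> 2 * real (card S)" if "cutset V E S" for S
    using T that by (auto simp: tough_def)
  have delE: "del_verts_E F {} = F" for F :: "'a set set" by (simp add: del_verts_E_def)
  have conn: "ncomp V E \<le> 1"
  proof (rule ccontr)
    assume "\<not> ?thesis"
    then have "cutset V E {}" by (simp add: cutset_def delE)
    then show False using Tc[of "{}"] by (simp add: cutset_def)
  qed
  have finV: "finite V" using assms(1) by (simp add: graph_def)
  obtain u v where uv: "u \<noteq> v" "u \<in> V" "v \<in> V" "e = {u,v}"
    using assms(1) eE by (auto simp: graph_def)
  show "\<exists>S. witness_set V E (1/2) e S \<and> card S \<le> 1"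
  proof (cases "bridge V E e")
    case True
    then show ?thesis by (intro exI[of _ "{}"]) (simp add: witness_set_def)
  next
    case nb: False
    have "\<not> tough V (E - {e}) (1/2)" using not_tough[of V "E - {e}" "1/2"] tE eE by simp
    then obtain S where S: "cutset V (E - {e}) S"
      "real (ncomp (V - S) (del_verts_E (E - {e}) S)) > 2 * real (card S)"
      by (auto simp: tough_def)
    define a where "a = ncomp (V - S) (del_verts_E E S)"
    define b where "b = ncomp (V - S) (del_verts_E (E - {e}) S)"
    define k where "k = card S"
    have SV: "S \<subseteq> V" using S(1) by (simp add: cutset_def)
    have finS: "finite S" using SV finV finite_subset by blast
    have b1: "b > 1" using S(1) by (simp add: cutset_def b_def)
    have b2: "b > 2 * k" using S(2) by (simp add: b_def k_def)
    have Sne: "S \<noteq> {}"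
    proof
      assume "S = {}"
      then have "ncomp V (E - {e}) > ncomp V E" using b1 conn by (simp add: b_def delE)
      then show False using nb eE by (simp add: bridge_def)
    qed
    have k1: "k \<ge> 1" using Sne finS by (simp add: k_def Suc_leI card_gt_0_iff)
    have a2: "a \<le> 2 * k"
    proof (cases "cutset V E S")
      case True then show ?thesis using Tc[OF True] by (simp add: a_def k_def)
    next
      case False then have "a \<le> 1" using SV by (simp add: cutset_def a_def)
      then show ?thesis using k1 by linarith
    qed
    have dE: "del_verts_E (E - {e}) S = del_verts_E E S - {e}" by (auto simp: del_verts_E_def)
    have uvS: "u \<in> V - S" "v \<in> V - S"
    proof -
      have "e \<inter> S = {}"
      proof (rule ccontr)
        assume "e \<inter> S \<noteq> {}"
        then have "del_verts_E (E - {e}) S = del_verts_E E S" by (auto simp: del_verts_E_def)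
        then have "a = b" by (simp add: a_def b_def)
        then show False using a2 b2 by linarith
      qed
      then show "u \<in> V - S" "v \<in> V - S" using uv by auto
    qed
    have eES: "e \<in> del_verts_E E S" using eE uvS uv(4) by (auto simp: del_verts_E_def)
    have "ncomp (V - S) (del_verts_E E S - {e}) \<le> ncomp (V - S) (del_verts_E E S) + 1"
      using ncomp_del_edge[of "V - S" u v "del_verts_E E S"] finV uvS uv(4) by simp
    then have ba: "b \<le> a + 1" unfolding a_def b_def dE .
    have br: "bridge (V - S) (del_verts_E E S) e"
      using eES ba a2 b2 by (simp add: bridge_def a_def b_def dE[symmetric])
    have wit: "witness_set V E (1/2) e S"
      unfolding witness_set_def using SV nb br a2 b2
      by (simp add: a_def b_def k_def)
    have "k \<le> 1"
    proof (rule ccontr)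
      assume "\<not> k \<le> 1"
      then have k2: "k \<ge> 2" by simp
      obtain s where s: "s \<in> S" using Sne by blast
      define c where "c = ncomp (V - (S - {s})) (del_verts_E E (S - {s}))"
      have "a \<le> c + 1" using ncomp_add_vertex[OF assms(1,2) s SV] by (simp add: a_def c_def)
      then have c3: "c \<ge> 2 * k - 1" using ba b2 by linarith
      then have "cutset V E (S - {s})" using k2 SV by (auto simp: cutset_def c_def)
      then have "real c \<le> 2 * real (card (S - {s}))" using Tc by (simp add: c_def)
      moreover have "card (S - {s}) = k - 1" using s finS by (simp add: k_def)
      ultimately show False using c3 k2 by linarith
    qed
    then show ?thesis using wit by (auto simp: k_def)
  qed
qed

end
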